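(* Let $G$ be a probability distribution on $\mathbb{R}^d$, let $w\ge 1$ and $T\ge 1$ be integers, set $\psi = 2^w$ and $L = Tw$. For $t=1,\dots,T$, let $\mathcal{D}^t=(\mathbf{s}^t_1,\dots,\mathbf{s}^t_\psi)$ be drawn i.i.d. from $G$, independently across $t$. For $\mathbf{x}\in\mathbb{R}^d$ define the hash functions $h^t_i(\mathbf{x}) = 1$ if $\mathbf{s}^t_i$ is the nearest point of $\mathcal{D}^t$ to $\mathbf{x}$ in Euclidean distance and $h^t_i(\mathbf{x})=0$ otherwise, where ties are broken by assigning $\mathbf{x}$ to one of the nearest points chosen uniformly at random (independently of everything else), so exactly one $h^t_i(\mathbf{x})$ equals $1$; let $i_t(\mathbf{x})$ denote that index. Define the encoded bits $$e^t_j(\mathbf{x}) = \left\lfloor \frac{i_t(\mathbf{x})}{2^{j-1}} \right\rfloor \bmod 2, \qquad j=1,\dots,w,$$ the $w$-bit vector $b^t(\mathbf{x}) = [e^t_1(\mathbf{x}),\dots,e^t_w(\mathbf{x})]$, and the $L$-bit code $\mathcal{B}(\mathbf{x}) = [b^1(\mathbf{x}),\dots,b^T(\mathbf{x})]$. Then for every fixed $\mathbf{x}\in\mathbb{R}^d$, the $L$ bits of $\mathcal{B}(\mathbf{x})$, viewed as random variables over the draws of $\mathcal{D}^1,\dots,\mathcal{D}^T$ (and tie-breaking), are mutually independent: for all values $v_1,\dots,v_L\in\{0,1\}$, the probability that the bits equal $v_1,\dots,v_L$ equals the product of the individual probabilities that each bit takes its value.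
   Context: This is the Voronoi Diagram Encoded Hashing (VDeH) scheme: each of the $T=L/w$ independently sampled Voronoi diagrams with $\psi=2^w$ cells is turned into $w$ bits by binary-encoding the index of the cell containing $\mathbf{x}$, and the $T$ resulting $w$-bit blocks are concatenated. *)

theory Defs
  imports "HOL-Probability.Probability"
begin

definition nearest_set :: "nat \<Rightarrow> 'a::metric_space \<Rightarrow> (nat \<Rightarrow> 'a) \<Rightarrow> nat set" where
  "nearest_set psi x S = {i \<in> {1..psi}. \<forall>k\<in>{1..psi}. dist x (S i) \<le> dist x (S k)}"

text \<open>Uniform tie-breaking: a uniformly random permutation sigma of {1..psi}
  (independent of everything else) ranks the indices, and x is assigned to the
  nearest sample point of smallest rank; this is uniform over the nearest points.\<close>
definition vd_index :: "nat \<Rightarrow> 'a::metric_space \<Rightarrow> (nat \<Rightarrow> 'a) \<Rightarrow> (nat \<Rightarrow> nat) \<Rightarrow> nat" where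
  "vd_index psi x S \<sigma> =
     (THE i. i \<in> nearest_set psi x S \<and> \<sigma> i = Min (\<sigma> ` nearest_set psi x S))"

definition enc_bit :: "nat \<Rightarrow> nat \<Rightarrow> nat" where
  "enc_bit i j = (i div 2 ^ (j - 1)) mod 2"

definition block_space :: "'a measure \<Rightarrow> nat \<Rightarrow> ((nat \<Rightarrow> 'a) \<times> (nat \<Rightarrow> nat)) measure" where
  "block_space G psi =
     (PiM {1..psi} (\<lambda>_. G)) \<Otimes>\<^sub>M measure_pmf (pmf_of_set {\<sigma>. \<sigma> permutes {1..psi}})"

definition vdeh_space :: "'a measure \<Rightarrow> nat \<Rightarrow> nat \<Rightarrow> (nat \<Rightarrow> (nat \<Rightarrow> 'a) \<times> (nat \<Rightarrow> nat)) measure" where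
  "vdeh_space G w T = PiM {..<T} (\<lambda>_. block_space G (2 ^ w))"

text \<open>Bit number l (0-based, l < T*w) of the code B(x): it is bit e^t_j with
  t = l div w (0-based block) and j = l mod w + 1.\<close>
definition vdeh_bit :: "nat \<Rightarrow> 'a::metric_space \<Rightarrow> (nat \<Rightarrow> (nat \<Rightarrow> 'a) \<times> (nat \<Rightarrow> nat)) \<Rightarrow> nat \<Rightarrow> nat" where
  "vdeh_bit w x \<omega> l =
     enc_bit (vd_index (2 ^ w) x (fst (\<omega> (l div w))) (snd (\<omega> (l div w)))) (l mod w + 1)"

end

theory Submission
  imports Defs
begin


lemma ns_sub: "nearest_set n x S \<subseteq> {1..n}"
  by (auto simp: nearest_set_def)

lemma ns_ne: assumes "n \<ge> 1" shows "nearest_set n x S \<noteq> {}"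
proof -
  let ?f = "\<lambda>i. dist x (S i)"
  have "Min (?f ` {1..n}) \<in> ?f ` {1..n}" using assms by (intro Min_in) auto
  then obtain i where i: "i \<in> {1..n}" "?f i = Min (?f ` {1..n})" by auto
  have "\<forall>k\<in>{1..n}. ?f i \<le> ?f k" using i by auto
  with i show ?thesis by (auto simp: nearest_set_def)
qed

lemma vd_char:
  assumes "n \<ge> 1" "inj_on \<sigma> {1..n}"
  shows "vd_index n x S \<sigma> \<in> nearest_set n x S
    \<and> \<sigma> (vd_index n x S \<sigma>) = Min (\<sigma> ` nearest_set n x S)
    \<and> (\<forall>i. i \<in> nearest_set n x S \<and> \<sigma> i = Min (\<sigma> ` nearest_set n x S) \<longrightarrow> i = vd_index n x S \<sigma>)"
proof -
  let ?N = "nearest_set n x S"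
  have fin: "finite ?N" using ns_sub[of n x S] finite_subset by blast
  have "Min (\<sigma> ` ?N) \<in> \<sigma> ` ?N" using fin ns_ne[OF assms(1)] by (intro Min_in) auto
  then obtain i where i: "i \<in> ?N" "\<sigma> i = Min (\<sigma> ` ?N)" by auto
  have inj: "inj_on \<sigma> ?N" using inj_on_subset[OF assms(2) ns_sub] .
  have ex1: "\<exists>!i. i \<in> ?N \<and> \<sigma> i = Min (\<sigma> ` ?N)"
  proof (rule ex1I[of _ i])
    show "i \<in> ?N \<and> \<sigma> i = Min (\<sigma> ` ?N)" using i by blast
    fix j assume "j \<in> ?N \<and> \<sigma> j = Min (\<sigma> ` ?N)"
    then have "\<sigma> j = \<sigma> i" "j \<in> ?N" using i by auto
    then show "j = i" using inj_onD[OF inj] i(1) by blast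
  qed
  have e: "vd_index n x S \<sigma> = (THE i. i \<in> ?N \<and> \<sigma> i = Min (\<sigma> ` ?N))"
    by (simp add: vd_index_def)
  have t: "vd_index n x S \<sigma> \<in> ?N \<and> \<sigma> (vd_index n x S \<sigma>) = Min (\<sigma> ` ?N)"
    unfolding e by (rule theI'[OF ex1])
  have u: "\<forall>i. i \<in> ?N \<and> \<sigma> i = Min (\<sigma> ` ?N) \<longrightarrow> i = vd_index n x S \<sigma>"
  proof (intro allI impI)
    fix i assume "i \<in> ?N \<and> \<sigma> i = Min (\<sigma> ` ?N)"
    then show "i = vd_index n x S \<sigma>" unfolding e by (rule the1_equality[OF ex1, symmetric])
  qed
  show ?thesis using conjunct1[OF t] conjunct2[OF t] u by (intro conjI)
qed

lemma vd_in: "n \<ge> 1 \<Longrightarrow> inj_on \<sigma> {1..n} \<Longrightarrow> vd_index n x S \<sigma> \<in> {1..n}"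
  using subsetD[OF ns_sub conjunct1[OF vd_char]] by blast

lemma vd_equiv:
  assumes "n \<ge> 1" "inj_on \<sigma> {1..n}" "\<pi> permutes {1..n}"
  shows "\<pi> (vd_index n x (\<lambda>i\<in>{1..n}. S (\<pi> i)) (\<sigma> \<circ> \<pi>)) = vd_index n x S \<sigma>"
proof -
  let ?S = "\<lambda>i\<in>{1..n}. S (\<pi> i)"
  have bij: "bij_betw \<pi> {1..n} {1..n}" using assms(3) permutes_imp_bij by blast
  have pin: "\<And>j. j \<in> {1..n} \<longleftrightarrow> \<pi> j \<in> {1..n}" using assms(3)
    by (rule permutes_in_image[symmetric])
  have N': "nearest_set n x ?S = {j\<in>{1..n}. \<pi> j \<in> nearest_set n x S}"
  proof -
    have "(\<forall>k\<in>{1..n}. dist x (S (\<pi> j)) \<le> dist x (S (\<pi> k))) \<longleftrightarrow>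
          (\<forall>k\<in>{1..n}. dist x (S (\<pi> j)) \<le> dist x (S k))" for j
    proof
      assume H: "\<forall>k\<in>{1..n}. dist x (S (\<pi> j)) \<le> dist x (S (\<pi> k))"
      show "\<forall>k\<in>{1..n}. dist x (S (\<pi> j)) \<le> dist x (S k)"
      proof
        fix k assume k: "k \<in> {1..n}"
        have "k \<in> \<pi> ` {1..n}" using k bij by (simp add: bij_betw_def)
        then obtain k' where "k' \<in> {1..n}" "k = \<pi> k'" by blast
        then show "dist x (S (\<pi> j)) \<le> dist x (S k)" using H by blast
      qed
    next
      assume H: "\<forall>k\<in>{1..n}. dist x (S (\<pi> j)) \<le> dist x (S k)"
      show "\<forall>k\<in>{1..n}. dist x (S (\<pi> j)) \<le> dist x (S (\<pi> k))"
        using H pin by blast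
    qed
    moreover have "(\<forall>k\<in>{1..n}. dist x (?S j) \<le> dist x (?S k)) \<longleftrightarrow>
          (\<forall>k\<in>{1..n}. dist x (S (\<pi> j)) \<le> dist x (S (\<pi> k)))" if "j \<in> {1..n}" for j
      using that by auto
    ultimately show ?thesis unfolding nearest_set_def using pin by blast
  qed
  have img: "\<pi> ` nearest_set n x ?S = nearest_set n x S"
  proof
    show "\<pi> ` nearest_set n x ?S \<subseteq> nearest_set n x S" using N' by auto
    show "nearest_set n x S \<subseteq> \<pi> ` nearest_set n x ?S"
    proof
      fix i assume i: "i \<in> nearest_set n x S"
      then have "i \<in> {1..n}" using ns_sub by blast
      then have "i \<in> \<pi> ` {1..n}" using bij by (simp add: bij_betw_def)
      then obtain j where "j \<in> {1..n}" "\<pi> j = i" by blast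
      then show "i \<in> \<pi> ` nearest_set n x ?S" using N' i by auto
    qed
  qed
  have inj2: "inj_on (\<sigma> \<circ> \<pi>) {1..n}"
    using assms(2) bij by (intro comp_inj_on) (auto simp: bij_betw_def)
  have mins: "(\<sigma> \<circ> \<pi>) ` nearest_set n x ?S = \<sigma> ` nearest_set n x S"
    by (simp only: image_comp[symmetric] img)
  note c1 = vd_char[OF assms(1) inj2, of x ?S]
  note c2 = vd_char[OF assms(1) assms(2), of x S]
  let ?j = "vd_index n x ?S (\<sigma> \<circ> \<pi>)"
  have "\<pi> ?j \<in> nearest_set n x S" using c1 N' by auto
  moreover have "\<sigma> (\<pi> ?j) = Min (\<sigma> ` nearest_set n x S)" using c1 mins by simp
  ultimately show ?thesis using c2 by blast
qed



lemma card_half: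
  fixes N :: nat
  shows "card {i. i < 2 * N \<and> odd i = c \<and> P (i div 2)} = card {m. m < N \<and> P m}"
proof -
  have "{i. i < 2 * N \<and> odd i = c \<and> P (i div 2)} = (\<lambda>m. 2 * m + of_bool c) ` {m. m < N \<and> P m}"
  proof (intro set_eqI iffI)
    fix i assume "i \<in> {i. i < 2 * N \<and> odd i = c \<and> P (i div 2)}"
    then show "i \<in> (\<lambda>m. 2 * m + of_bool c) ` {m. m < N \<and> P m}"
      by (auto intro!: image_eqI[where x="i div 2"])
  qed auto
  moreover have "inj (\<lambda>m::nat. 2 * m + of_bool c)" by (auto simp: inj_def)
  ultimately show ?thesis by (simp add: card_image inj_on_def)
qed

lemma card_double:
  fixes N :: nat
  shows "card {i. i < 2 * N \<and> P (i div 2)} = 2 * card {m. m < N \<and> P m}"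
proof -
  have "{i. i < 2 * N \<and> P (i div 2)} = {i. i < 2 * N \<and> odd i = True \<and> P (i div 2)}
      \<union> {i. i < 2 * N \<and> odd i = False \<and> P (i div 2)}" by auto
  then show ?thesis using card_half[of N True P] card_half[of N False P]
    by (simp add: card_Un_disjoint disjoint_iff)
qed

lemma card_pattern:
  "card {i::nat. i < 2 ^ w \<and> (\<forall>k<w. bit i k = b k)} = (1::nat)"
proof (induction w arbitrary: b)
  case 0
  then show ?case by simp
next
  case (Suc w)
  have "{i::nat. i < 2 ^ Suc w \<and> (\<forall>k<Suc w. bit i k = b k)}
      = {i. i < 2 * 2 ^ w \<and> odd i = b 0 \<and> (\<lambda>m. \<forall>k<w. bit m k = b (Suc k)) (i div 2)}"
    by (auto simp: All_less_Suc2 bit_0 bit_Suc)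
  then show ?case using card_half[of "2^w" "b 0" "\<lambda>m. \<forall>k<w. bit m k = b (Suc k)"] Suc by simp
qed

lemma card_onebit:
  "k < w \<Longrightarrow> card {i::nat. i < 2 ^ w \<and> bit i k = c} = 2 ^ (w - 1)"
proof (induction w arbitrary: k)
  case 0
  then show ?case by simp
next
  case (Suc w)
  show ?case
  proof (cases k)
    case 0
    have "{i::nat. i < 2 ^ Suc w \<and> bit i k = c} = {i. i < 2 * 2 ^ w \<and> odd i = c \<and> (\<lambda>m. True) (i div 2)}"
      using 0 by (auto simp: bit_0)
    then show ?thesis using card_half[of "2^w" c "\<lambda>m. True"] by simp
  next
    case (Suc k')
    with Suc.prems have kw: "k' < w" by simp
    have "{i::nat. i < 2 ^ Suc w \<and> bit i k = c} = {i. i < 2 * 2 ^ w \<and> (\<lambda>m. bit m k' = c) (i div 2)}"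
      using Suc by (auto simp: bit_Suc)
    then have "card {i::nat. i < 2 ^ Suc w \<and> bit i k = c} = 2 * 2 ^ (w - 1)"
      using card_double[of "2^w" "\<lambda>m. bit m k' = c"] Suc.IH[OF kw] by simp
    also have "\<dots> = 2 ^ (Suc w - 1)" using kw by (cases w) auto
    finally show ?thesis .
  qed
qed

lemma enc_bit_eq: "enc_bit i j = (if bit i (j - 1) then 1 else 0)"
  by (simp add: enc_bit_def bit_iff_odd odd_iff_mod_2_eq_one)

lemma enc_bit_mod: assumes "1 \<le> j" "j \<le> w" shows "enc_bit (i mod 2 ^ w) j = enc_bit i j"
proof -
  from assms have "j - 1 < w" by linarith
  then show ?thesis by (simp add: enc_bit_eq take_bit_eq_mod[symmetric] bit_take_bit_iff)
qed

lemma bij_mod: "bij_betw (\<lambda>i. i mod 2 ^ w) {1..2 ^ w} {..<(2::nat) ^ w}"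
proof -
  have "(\<lambda>i. i mod 2 ^ w) ` {1..2 ^ w} = {..<(2::nat) ^ w}"
  proof (intro set_eqI iffI)
    fix m assume "m \<in> {..<(2::nat) ^ w}"
    then show "m \<in> (\<lambda>i. i mod 2 ^ w) ` {1..2 ^ w}"
    proof (cases "m = 0")
      case True
      have "(2::nat) ^ w mod 2 ^ w = 0" by simp
      moreover have "(2::nat) ^ w \<in> {1..2 ^ w}" by simp
      ultimately show ?thesis using True by (metis image_eqI)
    next
      case False
      with \<open>m \<in> _\<close> show ?thesis by (auto intro!: image_eqI[where x=m])
    qed
  qed auto
  moreover have "inj_on (\<lambda>i. i mod 2 ^ w) {1..(2::nat) ^ w}"
  proof (rule inj_onI)
    fix a b assume "a \<in> {1..(2::nat) ^ w}" "b \<in> {1..(2::nat) ^ w}" "a mod 2 ^ w = b mod 2 ^ w"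
    then show "a = b"
      by (metis atLeastAtMost_iff le_eq_less_or_eq mod_less mod_self not_one_le_zero nat_less_le
          zero_less_numeral zero_less_power)
  qed
  ultimately show ?thesis by (simp add: bij_betw_def)
qed

lemma card_transfer:
  assumes "\<And>i. Q (i mod 2 ^ w) = Q i"
  shows "card {i \<in> {1..2 ^ w}. Q i} = card {i. i < (2::nat) ^ w \<and> Q i}"
proof -
  have img: "(\<lambda>i. i mod 2 ^ w) ` {i \<in> {1..2 ^ w}. Q i} = {i. i < (2::nat) ^ w \<and> Q i}"
  proof (intro set_eqI iffI)
    fix m assume "m \<in> (\<lambda>i. i mod 2 ^ w) ` {i \<in> {1..2 ^ w}. Q i}"
    then obtain i where "i \<in> {1..2 ^ w}" "Q i" "m = i mod 2 ^ w" by blast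
    then show "m \<in> {i. i < (2::nat) ^ w \<and> Q i}" using assms[of i] by simp
  next
    fix m assume m: "m \<in> {i. i < (2::nat) ^ w \<and> Q i}"
    then have "m \<in> (\<lambda>i. i mod 2 ^ w) ` {1..2 ^ w}" using bij_mod[of w] by (simp add: bij_betw_def)
    then obtain i where i: "i \<in> {1..2 ^ w}" "m = i mod 2 ^ w" by blast
    then have "Q i" using assms[of i] m by simp
    with i show "m \<in> (\<lambda>i. i mod 2 ^ w) ` {i \<in> {1..2 ^ w}. Q i}" by blast
  qed
  have "bij_betw (\<lambda>i. i mod 2 ^ w) {i \<in> {1..2 ^ w}. Q i} {i. i < (2::nat) ^ w \<and> Q i}"
    by (rule bij_betw_subset[OF bij_mod[of w] _ img]) blast
  then show ?thesis by (rule bij_betw_same_card)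
qed

lemma enc_pt: "c \<in> {0,1} \<Longrightarrow> (enc_bit i (j + 1) = c) \<longleftrightarrow> (bit i j = (c = 1))"
  by (auto simp: enc_bit_eq)

lemma enc_01: "enc_bit i j \<in> {0,1}"
  by (simp add: enc_bit_eq)

lemma count_pattern:
  "card {i \<in> {1..2 ^ w}. \<forall>j<w. enc_bit i (j + 1) = b j} = (if \<forall>j<w. b j \<in> {0,1} then 1 else 0)"
proof -
  have "card {i \<in> {1..2 ^ w}. \<forall>j<w. enc_bit i (j + 1) = b j}
      = card {i. i < (2::nat) ^ w \<and> (\<forall>j<w. enc_bit i (j + 1) = b j)}"
  proof (rule card_transfer)
    fix i :: nat
    have "\<forall>j<w. enc_bit (i mod 2^w) (j+1) = enc_bit i (j+1)"
      using enc_bit_mod by (metis Suc_eq_plus1 Suc_leI le_add2)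
    then show "(\<forall>j<w. enc_bit (i mod 2 ^ w) (j + 1) = b j) = (\<forall>j<w. enc_bit i (j + 1) = b j)"
      by metis
  qed
  also have "\<dots> = (if \<forall>j<w. b j \<in> {0,1} then 1 else 0)"
  proof (cases "\<forall>j<w. b j \<in> {0,1}")
    case True
    then have "{i. i < (2::nat) ^ w \<and> (\<forall>j<w. enc_bit i (j + 1) = b j)}
       = {i. i < 2 ^ w \<and> (\<forall>k<w. bit i k = (b k = 1))}"
      using enc_pt by blast
    then show ?thesis using True card_pattern by simp
  next
    case False
    then obtain j where j: "j < w" "b j \<notin> {0,1}" by auto
    have ne: "enc_bit i (j + 1) \<noteq> b j" for i using enc_01[of i "j+1"] j(2) by force
    have E: "{i. i < (2::nat) ^ w \<and> (\<forall>j<w. enc_bit i (j + 1) = b j)} = {}"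
      using ne j(1) by blast
    show ?thesis by (simp only: E card.empty if_not_P[OF False])
  qed
  finally show ?thesis .
qed

lemma count_single:
  assumes "j < w" "c \<in> {0,1}"
  shows "card {i \<in> {1..2 ^ w}. enc_bit i (j + 1) = c} = 2 ^ (w - 1)"
proof -
  have "card {i \<in> {1..2 ^ w}. enc_bit i (j + 1) = c}
      = card {i. i < (2::nat) ^ w \<and> enc_bit i (j + 1) = c}"
    by (rule card_transfer) (use assms in \<open>simp add: enc_bit_mod\<close>)
  also have "{i. i < (2::nat) ^ w \<and> enc_bit i (j + 1) = c} = {i. i < 2 ^ w \<and> bit i j = (c = 1)}"
    using enc_pt[OF assms(2)] by blast
  finally show ?thesis using card_onebit assms by simp
qed



definition Perms :: "nat \<Rightarrow> (nat \<Rightarrow> nat) set" where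
  "Perms n = {\<sigma>. \<sigma> permutes {1..n}}"

definition Fsel :: "nat set \<Rightarrow> (nat \<Rightarrow> nat) \<Rightarrow> nat" where
  "Fsel A \<sigma> = (THE i. i \<in> A \<and> \<sigma> i = Min (\<sigma> ` A))"

lemma vd_Fsel: "vd_index n x S \<sigma> = Fsel (nearest_set n x S) \<sigma>"
  by (simp add: vd_index_def Fsel_def)

lemma Perms_fin: "finite (Perms n)" and Perms_ne: "Perms n \<noteq> {}"
  by (auto simp: Perms_def finite_permutations intro: permutes_id)

lemma Perms_inj: "\<sigma> \<in> Perms n \<Longrightarrow> inj_on \<sigma> {1..n}"
  by (auto simp: Perms_def permutes_inj_on)

locale blk =
  fixes G :: "'a::euclidean_space measure" and n :: nat and x :: 'a
  assumes G: "prob_space G" and Gs: "sets G = sets borel" and n1: "n \<ge> 1"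
begin

abbreviation "PP \<equiv> PiM {1..n} (\<lambda>_. G)"
abbreviation "QQ \<equiv> measure_pmf (pmf_of_set (Perms n))"
abbreviation "MM \<equiv> block_space G n"
abbreviation "idx \<equiv> \<lambda>\<omega>. vd_index n x (fst \<omega>) (snd \<omega>)"

lemma MM_eq: "MM = PP \<Otimes>\<^sub>M QQ"
  by (simp add: block_space_def Perms_def)

lemma prob_PP: "prob_space PP"
  using G by (intro prob_space_PiM) auto

lemma prob_QQ: "prob_space QQ"
  by (rule prob_space_measure_pmf)

lemma prob_MM: "prob_space MM"
  unfolding MM_eq using prob_PP prob_QQ by (rule prob_space_pair)

lemma space_MM: "space MM = space PP \<times> UNIV"
  unfolding MM_eq by (simp add: space_pair_measure)

lemma comp_meas[measurable]: "(\<lambda>S. S i) \<in> borel_measurable PP"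
proof (cases "i \<in> {1..n}")
  case True
  have "(\<lambda>S. S i) \<in> measurable PP G" using True by (rule measurable_component_singleton)
  then show ?thesis using measurable_cong_sets[OF refl Gs] by blast
next
  case False
  have "\<forall>S\<in>space PP. S i = undefined" using False by (auto simp: space_PiM PiE_def extensional_def)
  then show ?thesis using measurable_cong[of PP "\<lambda>S. S i" "\<lambda>S. undefined" borel] by simp
qed

lemma dist_meas[measurable]: "(\<lambda>S. dist x (S i)) \<in> borel_measurable PP"
  by (intro borel_measurable_dist borel_measurable_const comp_meas)

lemma dist_pred[measurable]: "Measurable.pred PP (\<lambda>S. dist x (S i) \<le> dist x (S k))"
  unfolding pred_def by (rule borel_measurable_le[OF dist_meas dist_meas])

lemma ns_meas: "{S \<in> space PP. nearest_set n x S = A} \<in> sets PP" if "A \<subseteq> {1..n}"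
proof -
  have "{S \<in> space PP. nearest_set n x S = A} =
     {S \<in> space PP. (\<forall>i\<in>A. \<forall>k\<in>{1..n}. dist x (S i) \<le> dist x (S k)) \<and>
        (\<forall>i\<in>{1..n} - A. \<not> (\<forall>k\<in>{1..n}. dist x (S i) \<le> dist x (S k)))}"
    using that by (auto simp: nearest_set_def)
  also have "\<dots> \<in> sets PP" using that finite_subset[OF that] by measurable
  finally show ?thesis .
qed

lemma E_meas: "{\<omega> \<in> space MM. idx \<omega> \<in> B} \<in> sets MM"
proof -
  have "{\<omega> \<in> space MM. idx \<omega> \<in> B} =
     (\<Union>A\<in>Pow {1..n}. {S \<in> space PP. nearest_set n x S = A} \<times> {\<sigma>. Fsel A \<sigma> \<in> B})"
  proof (intro set_eqI iffI)
    fix \<omega> assume "\<omega> \<in> {\<omega> \<in> space MM. idx \<omega> \<in> B}"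
    then have "fst \<omega> \<in> space PP" "Fsel (nearest_set n x (fst \<omega>)) (snd \<omega>) \<in> B"
      by (auto simp: space_MM vd_Fsel)
    moreover have "nearest_set n x (fst \<omega>) \<in> Pow {1..n}" using ns_sub by blast
    ultimately show "\<omega> \<in> (\<Union>A\<in>Pow {1..n}. {S \<in> space PP. nearest_set n x S = A} \<times> {\<sigma>. Fsel A \<sigma> \<in> B})"
      by (intro UN_I[of "nearest_set n x (fst \<omega>)"]) (auto simp: mem_Times_iff)
  next
    fix \<omega> assume "\<omega> \<in> (\<Union>A\<in>Pow {1..n}. {S \<in> space PP. nearest_set n x S = A} \<times> {\<sigma>. Fsel A \<sigma> \<in> B})"
    then obtain A where "fst \<omega> \<in> space PP" "nearest_set n x (fst \<omega>) = A" "Fsel A (snd \<omega>) \<in> B"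
      by (auto simp: mem_Times_iff)
    then show "\<omega> \<in> {\<omega> \<in> space MM. idx \<omega> \<in> B}"
      by (simp add: space_MM vd_Fsel mem_Times_iff)
  qed
  also have "\<dots> \<in> sets MM" unfolding MM_eq
  proof (rule sets.finite_UN)
    fix A assume "A \<in> Pow {1..n}"
    then have "{S \<in> space PP. nearest_set n x S = A} \<in> sets PP" by (intro ns_meas) auto
    moreover have "{\<sigma>. Fsel A \<sigma> \<in> B} \<in> sets QQ" by simp
    ultimately show "{S \<in> space PP. nearest_set n x S = A} \<times> {\<sigma>. Fsel A \<sigma> \<in> B} \<in> sets (PP \<Otimes>\<^sub>M QQ)"
      by (rule pair_measureI)
  qed simp
  finally show ?thesis .
qed

abbreviation "gg \<pi> \<equiv> \<lambda>S. \<lambda>i\<in>{1..n}. S (\<pi> i)"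
abbreviation "hh \<pi> \<equiv> \<lambda>\<sigma>::nat\<Rightarrow>nat. \<sigma> \<circ> \<pi>"
abbreviation "ff \<pi> \<equiv> \<lambda>\<omega>. (gg \<pi> (fst \<omega>), hh \<pi> (snd \<omega>))"
abbreviation "EE B \<equiv> {\<omega> \<in> space MM. idx \<omega> \<in> B}"

lemma gg_meas: assumes "\<pi> permutes {1..n}" shows "gg \<pi> \<in> measurable PP PP"
proof (rule measurable_restrict)
  fix i :: nat assume "i \<in> {1..n}"
  then have "\<pi> i \<in> {1..n}" by (simp only: permutes_in_image[OF assms])
  then show "(\<lambda>S. S (\<pi> i)) \<in> measurable PP G" by (rule measurable_component_singleton)
qed

lemma hh_meas: "hh \<pi> \<in> measurable QQ QQ"
  by simp

lemma ff_meas: assumes "\<pi> permutes {1..n}" shows "ff \<pi> \<in> measurable MM MM"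
  unfolding MM_eq
  by (rule measurable_Pair[OF measurable_compose[OF measurable_fst gg_meas[OF assms]]
       measurable_compose[OF measurable_snd hh_meas]])

lemma gg_distr: assumes "\<pi> permutes {1..n}" shows "distr PP PP (gg \<pi>) = PP"
proof -
  have "inj_on \<pi> {1..n}" using assms by (simp add: permutes_inj_on)
  moreover have "\<pi> \<in> {1..n} \<rightarrow> {1..n}"
  proof
    fix i assume "i \<in> {1..n}"
    then show "\<pi> i \<in> {1..n}" by (simp only: permutes_in_image[OF assms])
  qed
  ultimately show ?thesis using distr_PiM_reindex[of "{1..n}" "\<lambda>_. G" \<pi> "{1..n}"] G by simp
qed

lemma hh_img: assumes "\<pi> permutes {1..n}" shows "hh \<pi> ` Perms n = Perms n"
proof
  show "hh \<pi> ` Perms n \<subseteq> Perms n"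
    using assms by (auto simp: Perms_def intro: permutes_compose)
  show "Perms n \<subseteq> hh \<pi> ` Perms n"
  proof
    fix \<tau> assume t: "\<tau> \<in> Perms n"
    have "(\<tau> \<circ> inv \<pi>) \<circ> \<pi> = \<tau>"
      using permutes_inv_o(2)[OF assms] by (simp add: comp_assoc)
    moreover have "\<tau> \<circ> inv \<pi> \<in> Perms n"
      using t permutes_inv[OF assms] by (auto simp: Perms_def intro: permutes_compose)
    ultimately show "\<tau> \<in> hh \<pi> ` Perms n" by (metis image_eqI)
  qed
qed

lemma hh_inj: assumes "\<pi> permutes {1..n}" shows "inj_on (hh \<pi>) (Perms n)"
proof (rule inj_onI)
  fix \<sigma> \<tau> :: "nat \<Rightarrow> nat" assume "\<sigma> \<circ> \<pi> = \<tau> \<circ> \<pi>"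
  then have "(\<sigma> \<circ> \<pi>) \<circ> inv \<pi> = (\<tau> \<circ> \<pi>) \<circ> inv \<pi>" by simp
  then show "\<sigma> = \<tau>" using permutes_inv_o(1)[OF assms] by (simp add: comp_assoc)
qed

lemma hh_distr: assumes "\<pi> permutes {1..n}" shows "distr QQ QQ (hh \<pi>) = QQ"
proof -
  have "distr QQ QQ (hh \<pi>) = distr QQ (count_space UNIV) (hh \<pi>)"
    by (rule distr_cong) auto
  also have "\<dots> = measure_pmf (map_pmf (hh \<pi>) (pmf_of_set (Perms n)))"
    by (simp add: map_pmf_rep_eq)
  also have "map_pmf (hh \<pi>) (pmf_of_set (Perms n)) = pmf_of_set (hh \<pi> ` Perms n)"
    by (rule map_pmf_of_set_inj[OF hh_inj[OF assms] Perms_ne Perms_fin])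
  also have "\<dots> = pmf_of_set (Perms n)" using hh_img[OF assms] by simp
  finally show ?thesis .
qed

lemma MM_distr: assumes "\<pi> permutes {1..n}" shows "distr MM MM (ff \<pi>) = MM"
proof -
  have sf: "sigma_finite_measure (distr QQ QQ (hh \<pi>))"
    unfolding hh_distr[OF assms] using prob_QQ by (rule prob_space_imp_sigma_finite)
  have f2: "(\<lambda>(x, y). (gg \<pi> x, hh \<pi> y)) = ff \<pi>" by (simp add: fun_eq_iff)
  note e0 = pair_measure_distr[OF gg_meas[OF assms] hh_meas sf, unfolded f2 gg_distr[OF assms] hh_distr[OF assms]]
  have e1: "PP \<Otimes>\<^sub>M QQ = distr (PP \<Otimes>\<^sub>M QQ) (PP \<Otimes>\<^sub>M QQ) (ff \<pi>)" by (rule e0)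
  show ?thesis unfolding MM_eq by (rule e1[symmetric])
qed

lemma AE_perm: "AE \<omega> in MM. snd \<omega> \<in> Perms n"
proof -
  interpret PP: prob_space PP by (rule prob_PP)
  interpret QQ: prob_space QQ by (rule prob_QQ)
  interpret pair_sigma_finite PP QQ
    by (intro pair_sigma_finite.intro prob_space_imp_sigma_finite prob_PP prob_QQ)
  have "{\<omega> \<in> space (PP \<Otimes>\<^sub>M QQ). snd \<omega> \<in> Perms n} \<in> sets (PP \<Otimes>\<^sub>M QQ)"
  proof -
    have "{\<omega> \<in> space (PP \<Otimes>\<^sub>M QQ). snd \<omega> \<in> Perms n} = space PP \<times> Perms n"
      by (auto simp: space_pair_measure)
    also have "\<dots> \<in> sets (PP \<Otimes>\<^sub>M QQ)" by (intro pair_measureI) auto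
    finally show ?thesis .
  qed
  moreover have "AE x in PP. AE y in QQ. snd (x, y) \<in> Perms n"
    by (intro AE_I2 AE_pmfI) (simp add: Perms_fin Perms_ne)
  ultimately have "AE \<omega> in PP \<Otimes>\<^sub>M QQ. snd \<omega> \<in> Perms n"
    by (rule AE_pair_measure)
  then show ?thesis unfolding MM_eq .
qed

lemma sym: assumes "\<pi> permutes {1..n}" shows "measure MM (EE {i}) = measure MM (EE {\<pi> i})"
proof -
  have "measure MM (EE {i}) = measure (distr MM MM (ff \<pi>)) (EE {i})"
    unfolding MM_distr[OF assms] ..
  also have "\<dots> = measure MM (ff \<pi> -` EE {i} \<inter> space MM)"
    by (rule measure_distr[OF ff_meas[OF assms] E_meas])
  also have "\<dots> = measure MM (EE {\<pi> i})"
  proof (rule measure_eq_AE)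
    show "AE \<omega> in MM. (\<omega> \<in> ff \<pi> -` EE {i} \<inter> space MM) = (\<omega> \<in> EE {\<pi> i})"
    proof (rule AE_mp[OF AE_perm AE_I2], rule impI)
      fix \<omega> assume sp: "\<omega> \<in> space MM" and pe: "snd \<omega> \<in> Perms n"
      have fsp: "ff \<pi> \<omega> \<in> space MM" using measurable_space[OF ff_meas[OF assms] sp] .
      have eq: "\<pi> (idx (ff \<pi> \<omega>)) = idx \<omega>"
        using vd_equiv[OF n1 Perms_inj[OF pe] assms, of x "fst \<omega>"] by simp
      have inj: "inj \<pi>" using assms by (rule permutes_inj)
      have "idx (ff \<pi> \<omega>) = i \<longleftrightarrow> idx \<omega> = \<pi> i"
        using eq inj by (metis injD)
      then show "(\<omega> \<in> ff \<pi> -` EE {i} \<inter> space MM) = (\<omega> \<in> EE {\<pi> i})"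
        using sp fsp by simp
    qed
    show "ff \<pi> -` EE {i} \<inter> space MM \<in> sets MM"
      by (rule measurable_sets[OF ff_meas[OF assms] E_meas])
    show "EE {\<pi> i} \<in> sets MM" by (rule E_meas)
  qed
  finally show ?thesis .
qed

lemma sym1: assumes "i \<in> {1..n}" shows "measure MM (EE {i}) = measure MM (EE {1})"
proof -
  have "Transposition.transpose i 1 permutes {1..n}" using assms n1 by (intro permutes_swap_id) auto
  from sym[OF this, of i] show ?thesis by simp
qed

lemma E_meas1: "{\<omega> \<in> space MM. idx \<omega> = i} \<in> sets MM"
  using E_meas[of "{i}"] by simp

lemma sumE: "measure MM (EE B) = (\<Sum>i\<in>B \<inter> {1..n}. measure MM (EE {i}))"
proof -
  interpret MM: prob_space MM by (rule prob_MM)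
  have "measure MM (EE B) = measure MM (\<Union>i\<in>B \<inter> {1..n}. EE {i})"
  proof (rule measure_eq_AE)
    show "AE \<omega> in MM. (\<omega> \<in> EE B) = (\<omega> \<in> (\<Union>i\<in>B \<inter> {1..n}. EE {i}))"
    proof (rule AE_mp[OF AE_perm AE_I2], rule impI)
      fix \<omega> assume sp: "\<omega> \<in> space MM" and pe: "snd \<omega> \<in> Perms n"
      have "idx \<omega> \<in> {1..n}" by (rule vd_in[OF n1 Perms_inj[OF pe]])
      then show "(\<omega> \<in> EE B) = (\<omega> \<in> (\<Union>i\<in>B \<inter> {1..n}. EE {i}))" using sp by auto
    qed
    show "EE B \<in> sets MM" by (rule E_meas)
    show "(\<Union>i\<in>B \<inter> {1..n}. EE {i}) \<in> sets MM"
      by (intro sets.finite_UN E_meas) auto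
  qed
  also have "\<dots> = (\<Sum>i\<in>B \<inter> {1..n}. measure MM (EE {i}))"
    by (rule MM.finite_measure_finite_Union) (auto simp: disjoint_family_on_def E_meas1)
  finally show ?thesis .
qed

lemma sumE2: "measure MM (EE B) = real (card (B \<inter> {1..n})) * measure MM (EE {1})"
proof -
  have "(\<Sum>i\<in>B \<inter> {1..n}. measure MM (EE {i})) = (\<Sum>i\<in>B \<inter> {1..n}. measure MM (EE {1}))"
    by (rule sum.cong[OF refl]) (rule sym1, blast)
  then show ?thesis using sumE[of B] by simp
qed

lemma m1: "measure MM (EE {1}) = 1 / real n"
proof -
  interpret MM: prob_space MM by (rule prob_MM)
  have "EE UNIV = space MM" by auto
  then have "1 = real (card (UNIV \<inter> {1..n})) * measure MM (EE {1})"
    using sumE2[of UNIV] MM.prob_space by simp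
  then have "1 = real n * measure MM (EE {1})" by simp
  then show ?thesis using n1 by (simp add: field_simps)
qed

lemma total: "measure MM (EE B) = real (card (B \<inter> {1..n})) / real n"
  using sumE2[of B] m1 by simp

end


context product_prob_space
begin
lemma measure_PiM_Collect':
  assumes "J \<subseteq> I" "finite J" "\<And>i. i \<in> J \<Longrightarrow> X i \<in> sets (M i)"
  shows "measure (Pi\<^sub>M I M) {x\<in>space (Pi\<^sub>M I M). \<forall>i\<in>J. x i \<in> X i} = (\<Prod>i\<in>J. measure (M i) (X i))"
  using emeasure_PiM_Collect[OF assms]
  unfolding emeasure_eq_measure M.emeasure_eq_measure
  by (simp add: prod_ennreal measure_nonneg prod_nonneg)

lemma measure_PiM_Collect_single':
  assumes "i \<in> I" "A \<in> sets (M i)"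
  shows "measure (Pi\<^sub>M I M) {x\<in>space (Pi\<^sub>M I M). x i \<in> A} = measure (M i) A"
  using emeasure_PiM_Collect_single[OF assms]
  unfolding emeasure_eq_measure M.emeasure_eq_measure
  by (simp add: measure_nonneg)
end

lemma split_idx:
  fixes w T :: nat
  assumes "w \<ge> 1"
  shows "(\<forall>l<T*w. Q l) \<longleftrightarrow> (\<forall>t<T. \<forall>j<w. Q (t*w+j))"
proof
  assume H: "\<forall>l<T*w. Q l"
  show "\<forall>t<T. \<forall>j<w. Q (t*w+j)"
  proof (intro allI impI)
    fix t j
    assume tj: "t < T" "j < w"
    have "Suc t * w \<le> T * w" using tj(1) by (intro mult_le_mono1) simp
    moreover have "Suc t * w = t * w + w" by simp
    ultimately have "t*w + j < T*w" using tj(2) by linarith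
    then show "Q (t*w+j)" using H by blast
  qed
next
  assume H: "\<forall>t<T. \<forall>j<w. Q (t*w+j)"
  show "\<forall>l<T*w. Q l"
  proof (intro allI impI)
    fix l assume l: "l < T*w"
    have "l div w < T" using l assms by (simp add: div_less_iff_less_mult)
    moreover have "l mod w < w" using assms by simp
    ultimately have "Q ((l div w)*w + l mod w)" using H by blast
    then show "Q l" by simp
  qed
qed

theorem theorem1:
  fixes G :: "(real ^ 'd) measure" and w T :: nat and x :: "real ^ 'd"
    and v :: "nat \<Rightarrow> nat"
  assumes "prob_space G" and "sets G = sets borel"
    and "w \<ge> 1" and "T \<ge> 1"
    and "\<forall>l < T * w. v l \<in> {0, 1}"
  shows "measure (vdeh_space G w T)
           {\<omega> \<in> space (vdeh_space G w T). \<forall>l < T * w. vdeh_bit w x \<omega> l = v l}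
         = (\<Prod>l < T * w. measure (vdeh_space G w T)
              {\<omega> \<in> space (vdeh_space G w T). vdeh_bit w x \<omega> l = v l})"
proof -
  let ?n = "(2::nat) ^ w"
  let ?M = "block_space G ?n"
  let ?\<Omega> = "vdeh_space G w T"
  let ?idx = "\<lambda>\<eta>. vd_index ?n x (fst \<eta>) (snd \<eta>)"
  have n1: "?n \<ge> 1" by simp
  have w0: "w > 0" using assms(3) by simp
  interpret B: blk G ?n x by (rule blk.intro[OF assms(1,2) n1])
  interpret P: product_prob_space "\<lambda>_::nat. ?M" "{..<T}"
    by (simp add: product_prob_space_def product_prob_space_axioms_def product_sigma_finite_def
        prob_space_imp_sigma_finite[OF B.prob_MM] B.prob_MM)
  have Om: "?\<Omega> = PiM {..<T} (\<lambda>_. ?M)" by (simp add: vdeh_space_def)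
  have spc: "\<omega> t \<in> space ?M" if "\<omega> \<in> space ?\<Omega>" "t < T" for \<omega> t
  proof -
    have "\<omega> \<in> PiE {..<T} (\<lambda>_. space ?M)" using that(1) unfolding Om space_PiM .
    moreover have "t \<in> {..<T}" using that(2) by simp
    ultimately show ?thesis by (rule PiE_mem)
  qed
  have bit_eq: "vdeh_bit w x \<omega> (t*w+j) = enc_bit (?idx (\<omega> t)) (j+1)" if "j < w" for \<omega> t j
    using that w0 by (simp add: vdeh_bit_def)
  define Bt where "Bt t = {i. \<forall>j<w. enc_bit i (j + 1) = v (t*w+j)}" for t
  have L1: "{\<omega> \<in> space ?\<Omega>. \<forall>l < T * w. vdeh_bit w x \<omega> l = v l}
      = {\<omega> \<in> space ?\<Omega>. \<forall>t\<in>{..<T}. \<omega> t \<in> {\<eta> \<in> space ?M. ?idx \<eta> \<in> Bt t}}"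
  proof (intro Collect_cong conj_cong refl)
    fix \<omega> assume sp: "\<omega> \<in> space ?\<Omega>"
    have "(\<forall>l < T * w. vdeh_bit w x \<omega> l = v l) \<longleftrightarrow> (\<forall>t<T. \<forall>j<w. vdeh_bit w x \<omega> (t*w+j) = v (t*w+j))"
      by (rule split_idx[OF assms(3)])
    also have "\<dots> \<longleftrightarrow> (\<forall>t\<in>{..<T}. \<omega> t \<in> {\<eta> \<in> space ?M. ?idx \<eta> \<in> Bt t})"
    proof -
      have step: "(\<forall>j<w. vdeh_bit w x \<omega> (t*w+j) = v (t*w+j)) \<longleftrightarrow> \<omega> t \<in> {\<eta> \<in> space ?M. ?idx \<eta> \<in> Bt t}"
        if "t < T" for t
      proof -
        have "\<omega> t \<in> space ?M" using spc[OF sp that] .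
        then show ?thesis by (simp add: Bt_def bit_eq)
      qed
      show ?thesis using step by (simp only: lessThan_iff Ball_def) blast
    qed
    finally show "(\<forall>l < T * w. vdeh_bit w x \<omega> l = v l) \<longleftrightarrow> (\<forall>t\<in>{..<T}. \<omega> t \<in> {\<eta> \<in> space ?M. ?idx \<eta> \<in> Bt t})" .
  qed
  have cardB: "card (Bt t \<inter> {1..?n}) = 1" if "t < T" for t
  proof -
    have "Bt t \<inter> {1..?n} = {i \<in> {1..?n}. \<forall>j<w. enc_bit i (j + 1) = v (t*w+j)}"
      unfolding Bt_def by blast
    moreover have allv: "\<forall>j<w. v (t*w+j) \<in> {0,1}"
    proof -
      have "\<forall>t<T. \<forall>j<w. v (t*w+j) \<in> {0,1}"
        using iffD1[OF split_idx[OF assms(3), where Q="\<lambda>l. v l \<in> {0,1}" and T=T] assms(5)] .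
      then show ?thesis using that by blast
    qed
    ultimately show ?thesis by (simp only: count_pattern if_P[OF allv])
  qed
  have LHS: "measure ?\<Omega> {\<omega> \<in> space ?\<Omega>. \<forall>l < T * w. vdeh_bit w x \<omega> l = v l} = (1 / real ?n) ^ T"
  proof -
    have "measure ?\<Omega> {\<omega> \<in> space ?\<Omega>. \<forall>l < T * w. vdeh_bit w x \<omega> l = v l}
        = (\<Prod>t\<in>{..<T}. measure ?M {\<eta> \<in> space ?M. ?idx \<eta> \<in> Bt t})"
      unfolding L1 unfolding Om by (rule P.measure_PiM_Collect') (auto intro: B.E_meas)
    also have "\<dots> = (\<Prod>t\<in>{..<T}. 1 / real ?n)"
    proof (rule prod.cong[OF refl])
      fix t assume "t \<in> {..<T}"
      then have "card (Bt t \<inter> {1..?n}) = 1" by (intro cardB) simp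
      then show "measure ?M {\<eta> \<in> space ?M. ?idx \<eta> \<in> Bt t} = 1 / real ?n"
        by (simp only: B.total of_nat_1)
    qed
    finally show ?thesis by simp
  qed
  have R1: "measure ?\<Omega> {\<omega> \<in> space ?\<Omega>. vdeh_bit w x \<omega> l = v l} = 1 / 2" if l: "l < T * w" for l
  proof -
    let ?C = "{i. enc_bit i (l mod w + 1) = v l}"
    have seq: "{\<omega> \<in> space ?\<Omega>. vdeh_bit w x \<omega> l = v l}
        = {\<omega> \<in> space ?\<Omega>. \<omega> (l div w) \<in> {\<eta> \<in> space ?M. ?idx \<eta> \<in> ?C}}"
    proof (rule Collect_cong)
      fix \<omega>
      have ld: "l div w < T" using l w0 by (simp add: div_less_iff_less_mult)
      show "(\<omega> \<in> space ?\<Omega> \<and> vdeh_bit w x \<omega> l = v l) \<longleftrightarrow>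
            (\<omega> \<in> space ?\<Omega> \<and> \<omega> (l div w) \<in> {\<eta> \<in> space ?M. ?idx \<eta> \<in> ?C})"
      proof (cases "\<omega> \<in> space ?\<Omega>")
        case True
        have msp: "\<omega> (l div w) \<in> space ?M" by (rule spc[OF True ld])
        have "vdeh_bit w x \<omega> l = enc_bit (?idx (\<omega> (l div w))) (l mod w + 1)"
          unfolding vdeh_bit_def ..
        then show ?thesis using True msp by simp
      next
        case False
        then show ?thesis by simp
      qed
    qed
    have m1: "measure ?\<Omega> {\<omega> \<in> space ?\<Omega>. \<omega> (l div w) \<in> {\<eta> \<in> space ?M. ?idx \<eta> \<in> ?C}} = measure ?M {\<eta> \<in> space ?M. ?idx \<eta> \<in> ?C}"
    proof -
      have "l div w \<in> {..<T}" using l w0 by (simp add: div_less_iff_less_mult)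
      then show ?thesis unfolding Om by (rule P.measure_PiM_Collect_single') (rule B.E_meas)
    qed
    have m2: "measure ?M {\<eta> \<in> space ?M. ?idx \<eta> \<in> ?C} = real (card (?C \<inter> {1..?n})) / real ?n" by (rule B.total)
    have m3: "real (card (?C \<inter> {1..?n})) / real ?n = 1 / 2"
    proof -
      have e: "?C \<inter> {1..?n} = {i \<in> {1..?n}. enc_bit i (l mod w + 1) = v l}" by blast
      have lm: "l mod w < w" using w0 by simp
      have vl: "v l \<in> {0,1}" using assms(5) l by blast
      have c: "card (?C \<inter> {1..?n}) = 2 ^ (w - 1)" unfolding e by (rule count_single[OF lm vl])
      obtain w' where "w = Suc w'" using w0 gr0_implies_Suc by blast
      then show ?thesis unfolding c by simp
    qed
    show ?thesis by (simp only: seq m1 m2 m3)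
  qed
  have "(\<Prod>l < T * w. measure ?\<Omega> {\<omega> \<in> space ?\<Omega>. vdeh_bit w x \<omega> l = v l}) = (\<Prod>l < T * w. 1 / 2)"
    by (rule prod.cong[OF refl]) (rule R1, simp)
  also have "\<dots> = (1/2::real)^(T*w)" by simp
  also have "\<dots> = (1/2)^(w*T)" by (simp only: mult.commute)
  also have "\<dots> = ((1/2)^w)^T" by (rule power_mult)
  also have "(1/2::real)^w = 1/real ?n" by (simp add: power_one_over)
  finally show ?thesis using LHS by simp
qed

end
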